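(* Let $G$ be a connected graph with $n$ vertices and $m$ edges. If $n\ge 15$ and $n+8\le m\le \min\{2n^{3/2},\binom{n}{2}\}$, then $\frac{q(G)}{R(G)}<\frac{n}{\sqrt{n-1}}$.
   Context: All graphs are finite and simple. For a vertex $u$, $d(u)$ is its degree. The Randić index is $R(G)=\sum_{\{u,v\}\in E(G)} \frac{1}{\sqrt{d(u)d(v)}}$. The signless Laplacian is $Q=D+A$ ($D$ the diagonal degree matrix, $A$ the adjacency matrix), and $q(G)$ is its largest eigenvalue. *)

theory Defs
  imports "HOL-Analysis.Analysis"
begin

definition simple_graph :: "('a::finite \<Rightarrow> 'a \<Rightarrow> bool) \<Rightarrow> bool" where
  "simple_graph E \<longleftrightarrow> (\<forall>u v. E u v \<longrightarrow> E v u) \<and> (\<forall>u. \<not> E u u)"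

definition connected_graph :: "('a::finite \<Rightarrow> 'a \<Rightarrow> bool) \<Rightarrow> bool" where
  "connected_graph E \<longleftrightarrow> (\<forall>u v. E\<^sup>*\<^sup>* u v)"

definition edges :: "('a \<Rightarrow> 'a \<Rightarrow> bool) \<Rightarrow> 'a set set" where
  "edges E = {{u, v} | u v. E u v}"

definition deg :: "('a::finite \<Rightarrow> 'a \<Rightarrow> bool) \<Rightarrow> 'a \<Rightarrow> nat" where
  "deg E u = card {v. E u v}"

definition randic :: "('a::finite \<Rightarrow> 'a \<Rightarrow> bool) \<Rightarrow> real" where
  "randic E = (\<Sum>e\<in>edges E. 1 / sqrt (\<Prod>x\<in>e. real (deg E x)))"

definition signless_laplacian :: "('a::finite \<Rightarrow> 'a \<Rightarrow> bool) \<Rightarrow> real^'a^'a" where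
  "signless_laplacian E = (\<chi> i j. (if i = j then real (deg E i) else 0) + (if E i j then 1 else 0))"

definition eigenvalues :: "real^'n^'n \<Rightarrow> real set" where
  "eigenvalues M = {c. \<exists>v. v \<noteq> 0 \<and> M *v v = c *\<^sub>R v}"

text \<open>q(G): largest eigenvalue of Q (Q is real symmetric, so all eigenvalues are real).\<close>
definition q_index :: "('a::finite \<Rightarrow> 'a \<Rightarrow> bool) \<Rightarrow> real" where
  "q_index E = Max (eigenvalues (signless_laplacian E))"

end

theory Submission
  imports Defs
begin

lemma pid1: fixes k m :: real shows "k * (k+1)^2 * m^2 - (2*m + k*(k-1))^2 * (2*m - k) = (m - k) * (-8*m^2 + k*(k-1)*(k-5)*m - k^2*(k-1)^2)"
  by (simp add: algebra_simps power2_eq_square power3_eq_cube)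
lemma pid2: fixes k :: real shows "-8*(k+9)^2 + k*(k-1)*(k-5)*(k+9) - k^2*(k-1)^2 = 318 + 1217*(k-14) + 152*(k-14)^2 + 5*(k-14)^3"
  by (simp add: algebra_simps power2_eq_square power3_eq_cube)
lemma pid3: fixes k :: real shows "-8*(k * (k+1) / 2)^2 + k*(k-1)*(k-5)*(k * (k+1) / 2) - k^2*(k-1)^2 = k^2/2 * (517 + 275*(k-14) + 31*(k-14)^2 + (k-14)^3)"
  by (simp add: field_simps power2_eq_square power3_eq_cube)
lemma pid4: fixes a b m k :: real shows "(-8*m^2 + k*(k-1)*(k-5)*m - k^2*(k-1)^2) * (b - a) = (b - m) * (-8*a^2 + k*(k-1)*(k-5)*a - k^2*(k-1)^2) + (m - a) * (-8*b^2 + k*(k-1)*(k-5)*b - k^2*(k-1)^2) + 8 * (m - a) * (b - m) * (b - a)"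
  by (simp add: algebra_simps power2_eq_square power3_eq_cube)

lemma poly_ineq:
  fixes k m :: real
  assumes k: "k \<ge> 14" and m1: "k + 9 \<le> m" and m2: "m \<le> k * (k + 1) / 2"
  shows "(2*m + k*(k-1))^2 * (2*m - k) < k * (k+1)^2 * m^2"
proof -
  define g where "g x = -8*x^2 + k*(k-1)*(k-5)*x - k^2*(k-1)^2" for x
  have id: "k * (k+1)^2 * m^2 - (2*m + k*(k-1))^2 * (2*m - k) = (m - k) * g m"
    unfolding g_def by (rule pid1)
  define a where "a = k + 9"
  define b where "b = k * (k+1) / 2"
  define t where "t = k - 14"
  have t: "t \<ge> 0" using k by (simp add: t_def)
  have ga: "g a = 318 + 1217*t + 152*t^2 + 5*t^3"
    unfolding g_def a_def t_def by (rule pid2)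
  have gb: "g b = k^2/2 * (517 + 275*t + 31*t^2 + t^3)"
    unfolding g_def b_def t_def by (rule pid3)
  have ga_pos: "g a > 0" unfolding ga using t by (simp add: add_pos_nonneg)
  have gb_pos: "g b > 0" unfolding gb using t k by (intro mult_pos_pos) (simp_all add: add_pos_nonneg)
  have ba: "b - a > 0" unfolding a_def b_def
  proof -
    have kk: "k * k \<ge> 14 * k" using k by (intro mult_right_mono) auto
    have e: "k * (k + 1) / 2 - (k + 9) = (k * k - k - 18) / 2" by (simp add: field_simps)
    have "k * k - k - 18 > 0" using kk k by linarith
    then show "k * (k + 1) / 2 - (k + 9) > 0" unfolding e by simp
  qed
  have id2: "g m * (b - a) = (b - m) * g a + (m - a) * g b + 8 * (m - a) * (b - m) * (b - a)"
    unfolding g_def by (rule pid4)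
  have "(b - m) * g a \<ge> 0" using m2 ga_pos unfolding b_def by simp
  moreover have "(m - a) * g b \<ge> 0" using m1 gb_pos unfolding a_def by simp
  moreover have "8 * (m - a) * (b - m) * (b - a) \<ge> 0" using m1 m2 ba unfolding a_def b_def by simp
  ultimately have "g m * (b - a) \<ge> 0" unfolding id2 by linarith
  moreover have "g m * (b - a) \<noteq> 0"
  proof
    assume "g m * (b - a) = 0"
    then have "g m = 0" using ba by simp
    then have z: "(b - m) * g a + (m - a) * g b + 8 * (m - a) * (b - m) * (b - a) = 0" using id2 by simp
    have "(b - m) * g a \<ge> 0" using m2 ga_pos unfolding b_def by simp
    moreover have "(m - a) * g b \<ge> 0" using m1 gb_pos unfolding a_def by simp
    moreover have "8 * (m - a) * (b - m) * (b - a) \<ge> 0" using m1 m2 ba unfolding a_def b_def by simp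
    ultimately have "(b - m) * g a = 0" "(m - a) * g b = 0" using z by linarith+
    then have "b = m" "m = a" using ga_pos gb_pos by auto
    then show False using ba by simp
  qed
  ultimately have "g m * (b - a) > 0" by linarith
  then have "g m > 0" using ba by (simp add: zero_less_mult_iff)
  moreover have "m - k > 0" using m1 by simp
  ultimately have "(m - k) * g m > 0" by simp
  then show ?thesis using id by simp
qed


lemma sym_inner:
  fixes M :: "real^'n^'n"
  assumes "transpose M = M"
  shows "(M *v x) \<bullet> y = x \<bullet> (M *v y)"
proof -
  have "(M *v x) \<bullet> y = (x v* transpose M) \<bullet> y" by simp
  also have "\<dots> = x \<bullet> (transpose M *v y)" by (rule dot_lmul_matrix)
  finally show ?thesis using assms by simp
qed

lemma eig_finite:
  fixes M :: "real^'n^'n"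
  assumes sym: "transpose M = M"
  shows "finite (eigenvalues M)"
proof -
  define v where "v c = (SOME v. v \<noteq> 0 \<and> M *v v = c *\<^sub>R v)" for c
  have vP: "v c \<noteq> 0 \<and> M *v v c = c *\<^sub>R v c" if "c \<in> eigenvalues M" for c
    unfolding v_def by (rule someI_ex) (use that in \<open>simp add: eigenvalues_def\<close>)
  have inj: "inj_on v (eigenvalues M)"
  proof (rule inj_onI)
    fix a b assume a: "a \<in> eigenvalues M" and b: "b \<in> eigenvalues M" and e: "v a = v b"
    have "a *\<^sub>R v a = M *v v a" using vP[OF a] by simp
    also have "\<dots> = M *v v b" using e by (rule arg_cong)
    also have "\<dots> = b *\<^sub>R v b" using vP[OF b] by simp
    also have "\<dots> = b *\<^sub>R v a" using e by (simp only:)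
    finally have "a *\<^sub>R v a = b *\<^sub>R v a" .
    then show "a = b" using vP[OF a] scaleR_cancel_right by blast
  qed
  have orth: "pairwise orthogonal (v ` eigenvalues M)"
    unfolding pairwise_def orthogonal_def
  proof (intro ballI impI)
    fix p q assume p: "p \<in> v ` eigenvalues M" and q: "q \<in> v ` eigenvalues M" and ne: "p \<noteq> q"
    obtain a where a: "a \<in> eigenvalues M" "p = v a" using p by blast
    obtain b where b: "b \<in> eigenvalues M" "q = v b" using q by blast
    have "a \<noteq> b" using ne a b by blast
    have "a * (p \<bullet> q) = (a *\<^sub>R p) \<bullet> q" by simp
    also have "\<dots> = (M *v p) \<bullet> q" using vP[OF a(1)] a(2) by simp
    also have "\<dots> = p \<bullet> (M *v q)" by (rule sym_inner[OF sym])
    also have "\<dots> = p \<bullet> (b *\<^sub>R q)" using vP[OF b(1)] b(2) by simp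
    also have "\<dots> = b * (p \<bullet> q)" by simp
    finally have "(a - b) * (p \<bullet> q) = 0" by (simp add: algebra_simps)
    then show "p \<bullet> q = 0" using \<open>a \<noteq> b\<close> by simp
  qed
  have "0 \<notin> v ` eigenvalues M" using vP by auto
  then have "independent (v ` eigenvalues M)"
    by (intro pairwise_orthogonal_independent[OF orth])
  then have "finite (v ` eigenvalues M)" by (rule independent_imp_finite)
  then show ?thesis by (rule finite_imageD[OF _ inj])
qed

lemma eig_nonempty:
  fixes M :: "real^'n^'n"
  assumes sym: "transpose M = M"
  shows "eigenvalues M \<noteq> {}"
proof -
  define f where "f y = y \<bullet> (M *v y)" for y :: "real^'n"
  have cont: "continuous_on (sphere 0 1) f"
    unfolding f_def
    by (intro continuous_on_inner continuous_on_id matrix_vector_mult_linear_continuous_on)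
  obtain i :: 'n where True by auto
  have "axis i (1::real) \<in> sphere 0 1" by simp
  then have ne: "sphere (0::real^'n) 1 \<noteq> {}" by blast
  obtain x where xs: "x \<in> sphere 0 1" and xmax: "\<And>y. y \<in> sphere 0 1 \<Longrightarrow> f y \<le> f x"
    using continuous_attains_sup[OF compact_sphere ne cont] by blast
  define l where "l = f x"
  have nx: "norm x = 1" using xs by simp
  have fscale: "f (a *\<^sub>R y) = a^2 * f y" for a y
    by (simp add: f_def matrix_vector_mult_scaleR power2_eq_square)
  have bound: "f y \<le> l * (norm y)^2" for y
  proof (cases "y = 0")
    case True then show ?thesis by (simp add: f_def)
  next
    case False
    then have "norm y > 0" by simp
    have "(inverse (norm y)) *\<^sub>R y \<in> sphere 0 1" using False by simp
    then have "f ((inverse (norm y)) *\<^sub>R y) \<le> l" using xmax l_def by blast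
    then have "(inverse (norm y))^2 * f y \<le> l" by (simp add: fscale)
    then show ?thesis using \<open>norm y > 0\<close>
      by (simp add: field_simps power2_eq_square)
  qed
  have key: "y \<bullet> (M *v x - l *\<^sub>R x) = 0" for y
  proof (rule ccontr)
    define a where "a = y \<bullet> (M *v x - l *\<^sub>R x)"
    define b where "b = f y - l * (norm y)^2"
    assume "a \<noteq> 0"
    have ineq: "2 * t * a + t^2 * b \<le> 0" for t
    proof -
      have "f (x + t *\<^sub>R y) \<le> l * (norm (x + t *\<^sub>R y))^2" by (rule bound)
      moreover have "f (x + t *\<^sub>R y) = l + 2 * t * (y \<bullet> (M *v x)) + t^2 * f y"
      proof -
        have "x \<bullet> (M *v y) = y \<bullet> (M *v x)"
          using sym_inner[OF sym, of y x] by (simp add: inner_commute)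
        moreover have "M *v (x + t *\<^sub>R y) = M *v x + t *\<^sub>R (M *v y)"
          by (simp add: matrix_vector_right_distrib matrix_vector_mult_scaleR)
        ultimately show ?thesis
          by (simp add: f_def l_def inner_add_left inner_add_right power2_eq_square distrib_left)
      qed
      moreover have "(norm (x + t *\<^sub>R y))^2 = 1 + 2 * t * (x \<bullet> y) + t^2 * (norm y)^2"
      proof -
        have xx: "x \<bullet> x = 1" using nx by (simp add: norm_eq_1)
        have "(norm (x + t *\<^sub>R y))^2 = (x + t *\<^sub>R y) \<bullet> (x + t *\<^sub>R y)" by (rule power2_norm_eq_inner)
        also have "\<dots> = x \<bullet> x + 2 * t * (x \<bullet> y) + t^2 * (y \<bullet> y)"
          by (simp add: inner_add_left inner_add_right inner_commute power2_eq_square algebra_simps)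
        finally show ?thesis using xx by (simp add: power2_norm_eq_inner)
      qed
      ultimately have H: "l + 2 * t * (y \<bullet> (M *v x)) + t^2 * f y \<le> l * (1 + 2 * t * (x \<bullet> y) + t^2 * (norm y)^2)"
        by simp
      have a_eq: "a = y \<bullet> (M *v x) - l * (x \<bullet> y)" by (simp add: a_def inner_diff_right inner_commute)
      show ?thesis using H unfolding a_eq b_def by (simp add: algebra_simps)
    qed
    define c where "c = \<bar>b\<bar> + 1"
    have pos: "c > 0" "c \<ge> 1" "b \<ge> - c" by (auto simp: c_def)
    define t where "t = a / c"
    have "c^2 * (2 * t * a + t^2 * b) = 2 * a^2 * c + a^2 * b"
      using pos by (simp add: t_def power2_eq_square field_simps)
    also have "\<dots> \<ge> a^2 * c"
    proof -
      have "a^2 * b \<ge> a^2 * (- c)" using pos by (intro mult_left_mono) auto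
      then show ?thesis by linarith
    qed
    finally have "c^2 * (2 * t * a + t^2 * b) \<ge> a^2 * c" .
    moreover have "a^2 * c > 0" using \<open>a \<noteq> 0\<close> pos by simp
    moreover have "c^2 * (2 * t * a + t^2 * b) \<le> 0"
      using ineq[of t] pos by (simp add: mult_nonneg_nonpos)
    ultimately show False by linarith
  qed
  have "(M *v x - l *\<^sub>R x) \<bullet> (M *v x - l *\<^sub>R x) = 0" by (rule key)
  then have "M *v x = l *\<^sub>R x" by simp
  moreover have "x \<noteq> 0" using nx by auto
  ultimately show ?thesis unfolding eigenvalues_def by blast
qed


lemma deg_pos:
  fixes E :: "'a::finite \<Rightarrow> 'a \<Rightarrow> bool"
  assumes "connected_graph E" "CARD('a) \<ge> 2"
  shows "deg E u \<ge> 1"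
proof -
  obtain v :: 'a where "v \<noteq> u"
  proof -
    have "card (UNIV - {u}) = CARD('a) - 1" by (simp add: card_Diff_singleton)
    then have "card (UNIV - {u}) \<noteq> 0" using assms(2) by simp
    then have "UNIV - {u} \<noteq> {}" by (metis card.empty)
    then show ?thesis using that by blast
  qed
  have "E\<^sup>*\<^sup>* u v" using assms(1) by (simp add: connected_graph_def)
  then obtain w where "E u w"
    using \<open>v \<noteq> u\<close> by (metis converse_rtranclpE)
  then have "{v. E u v} \<noteq> {}" by auto
  then show ?thesis unfolding deg_def by (simp add: Suc_leI card_gt_0_iff)
qed

lemma deg_le:
  fixes E :: "'a::finite \<Rightarrow> 'a \<Rightarrow> bool"
  assumes "simple_graph E"
  shows "real (deg E u) \<le> real CARD('a) - 1"
proof -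
  have "{v. E u v} \<subseteq> UNIV - {u}" using assms by (auto simp: simple_graph_def)
  then have "card {v. E u v} \<le> card (UNIV - {u} :: 'a set)" by (intro card_mono) auto
  also have "\<dots> = CARD('a) - 1" by (simp add: card_Diff_singleton)
  finally have "deg E u \<le> CARD('a) - 1" by (simp add: deg_def)
  moreover have "CARD('a) \<ge> 1" by (simp add: Suc_leI)
  ultimately show ?thesis by linarith
qed

lemma sum_pairs:
  fixes E :: "'a::finite \<Rightarrow> 'a \<Rightarrow> bool" and g :: "'a \<Rightarrow> 'a \<Rightarrow> real"
  shows "(\<Sum>(u,v)\<in>{(u,v). E u v}. g u v) = (\<Sum>u\<in>UNIV. \<Sum>v\<in>{v. E u v}. g u v)"
proof -
  have "{(u,v). E u v} = Sigma UNIV (\<lambda>u. {v. E u v})" by auto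
  then show ?thesis by (simp add: sum.Sigma)
qed

lemma sum_edges:
  fixes E :: "'a::finite \<Rightarrow> 'a \<Rightarrow> bool" and g :: "'a \<Rightarrow> 'a \<Rightarrow> real" and f :: "'a set \<Rightarrow> real"
  assumes sg: "simple_graph E" and gf: "\<And>u v. E u v \<Longrightarrow> g u v = f {u,v}"
  shows "(\<Sum>(u,v)\<in>{(u,v). E u v}. g u v) = 2 * (\<Sum>e\<in>edges E. f e)"
proof -
  define P where "P = {(u,v). E u v}"
  define h where "h p = {fst p, snd p}" for p :: "'a \<times> 'a"
  have fin: "finite P" by simp
  have img: "edges E = h ` P" unfolding edges_def h_def P_def image_def by auto
  have "(\<Sum>(u,v)\<in>P. g u v) = (\<Sum>e\<in>h ` P. \<Sum>p\<in>{p\<in>P. h p = e}. (\<lambda>(u,v). g u v) p)"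
    by (rule sum.image_gen[OF fin])
  also have "\<dots> = (\<Sum>e\<in>h ` P. 2 * f e)"
  proof (rule sum.cong[OF refl])
    fix e assume "e \<in> h ` P"
    then obtain a b where ab: "E a b" "e = {a,b}" unfolding P_def h_def by auto
    have ne: "a \<noteq> b" using ab sg by (auto simp: simple_graph_def)
    have ba: "E b a" using ab sg by (auto simp: simple_graph_def)
    have S: "{p\<in>P. h p = e} = {(a,b),(b,a)}"
    proof (rule set_eqI)
      fix p :: "'a \<times> 'a"
      obtain x y where p: "p = (x,y)" by fastforce
      have "{x,y} = {a,b} \<longleftrightarrow> (x = a \<and> y = b) \<or> (x = b \<and> y = a)" by (rule doubleton_eq_iff)
      then show "p \<in> {p\<in>P. h p = e} \<longleftrightarrow> p \<in> {(a,b),(b,a)}"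
        unfolding p P_def h_def using ab ba by auto
    qed
    have "(\<Sum>p\<in>{(a,b),(b,a)}. (\<lambda>(u,v). g u v) p) = g a b + g b a" using ne by simp
    also have "\<dots> = 2 * f e" using gf[OF ab(1)] gf[OF ba] ab(2) by (simp add: insert_commute)
    finally show "(\<Sum>p\<in>{p\<in>P. h p = e}. (\<lambda>(u,v). g u v) p) = 2 * f e" using S by simp
  qed
  finally show ?thesis using img by (simp add: P_def sum_distrib_left)
qed

lemma handshake:
  fixes E :: "'a::finite \<Rightarrow> 'a \<Rightarrow> bool"
  assumes "simple_graph E"
  shows "(\<Sum>u\<in>UNIV. real (deg E u)) = 2 * real (card (edges E))"
proof -
  have "(\<Sum>(u,v)\<in>{(u,v). E u v}. (1::real)) = 2 * (\<Sum>e\<in>edges E. 1)"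
    by (rule sum_edges[OF assms]) simp
  moreover have "(\<Sum>(u,v)\<in>{(u,v). E u v}. (1::real)) = (\<Sum>u\<in>UNIV. \<Sum>v\<in>{v. E u v}. 1)"
    by (rule sum_pairs)
  ultimately show ?thesis by (simp add: deg_def)
qed


lemma s_le:
  fixes E :: "'a::finite \<Rightarrow> 'a \<Rightarrow> bool"
  assumes sg: "simple_graph E" and cg: "connected_graph E" and n2: "CARD('a) \<ge> 2"
  shows "(\<Sum>v\<in>{v. E u v}. real (deg E v)) \<le> 2 * real (card (edges E)) - (real CARD('a) - 1)"
proof -
  define N where "N = {v. E u v}"
  define A where "A = UNIV - insert u N"
  have uN: "u \<notin> N" using sg by (auto simp: N_def simple_graph_def)
  have split: "(\<Sum>w\<in>UNIV. real (deg E w)) = (\<Sum>w\<in>N. real (deg E w)) + real (deg E u) + (\<Sum>w\<in>A. real (deg E w))"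
  proof -
    have U: "UNIV = N \<union> (insert u A)" unfolding A_def by auto
    have D: "N \<inter> insert u A = {}" using uN unfolding A_def by auto
    have uA: "u \<notin> A" unfolding A_def by auto
    have "(\<Sum>w\<in>UNIV. real (deg E w)) = (\<Sum>w\<in>N \<union> (insert u A). real (deg E w))"
      by (simp only: U[symmetric])
    also have "\<dots> = (\<Sum>w\<in>N. real (deg E w)) + (\<Sum>w\<in>insert u A. real (deg E w))"
      by (rule sum.union_disjoint) (use D in auto)
    also have "(\<Sum>w\<in>insert u A. real (deg E w)) = real (deg E u) + (\<Sum>w\<in>A. real (deg E w))"
      using uA by simp
    finally show ?thesis by simp
  qed
  have "(\<Sum>w\<in>A. real (deg E w)) \<ge> (\<Sum>w\<in>A. 1)"
    by (rule sum_mono) (use deg_pos[OF cg n2] in simp)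
  then have sA: "(\<Sum>w\<in>A. real (deg E w)) \<ge> real (card A)" by simp
  have "card A = CARD('a) - card (insert u N)" unfolding A_def by (simp add: card_Diff_subset)
  moreover have "card (insert u N) = deg E u + 1" using uN by (simp add: N_def deg_def)
  moreover have "card (insert u N) \<le> CARD('a)" by (rule card_mono) auto
  ultimately have "real (card A) = real CARD('a) - real (deg E u) - 1" by simp
  then show ?thesis using split sA handshake[OF sg] unfolding N_def by linarith
qed

lemma s_le2:
  fixes E :: "'a::finite \<Rightarrow> 'a \<Rightarrow> bool"
  assumes sg: "simple_graph E"
  shows "(\<Sum>v\<in>{v. E u v}. real (deg E v)) \<le> real (deg E u) * (real CARD('a) - 1)"
proof -
  have "(\<Sum>v\<in>{v. E u v}. real (deg E v)) \<le> (\<Sum>v\<in>{v. E u v}. real CARD('a) - 1)"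
    by (rule sum_mono) (rule deg_le[OF sg])
  then show ?thesis by (simp add: deg_def)
qed

lemma row_eq:
  fixes E :: "'a::finite \<Rightarrow> 'a \<Rightarrow> bool"
  shows "(signless_laplacian E *v x) $ u = real (deg E u) * x $ u + (\<Sum>v\<in>{v. E u v}. x $ v)"
proof -
  have "(signless_laplacian E *v x) $ u =
      (\<Sum>j\<in>UNIV. (if u = j then real (deg E u) * x $ j else 0) + (if E u j then x $ j else 0))"
    unfolding matrix_vector_mult_def by (simp, rule sum.cong) (auto simp: signless_laplacian_def algebra_simps)
  also have "\<dots> = real (deg E u) * x $ u + (\<Sum>j\<in>UNIV. if E u j then x $ j else 0)"
    by (simp add: sum.distrib)
  also have "(\<Sum>j\<in>UNIV. if E u j then x $ j else 0) = (\<Sum>v\<in>{v. E u v}. x $ v)"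
    by (simp add: sum.inter_filter[symmetric])
  finally show ?thesis .
qed

lemma eig_bound:
  fixes E :: "'a::finite \<Rightarrow> 'a \<Rightarrow> bool"
  assumes sg: "simple_graph E" and cg: "connected_graph E" and n2: "CARD('a) \<ge> 2"
    and ev: "signless_laplacian E *v x = c *\<^sub>R x" and x0: "x \<noteq> 0"
  shows "\<exists>u. c \<le> real (deg E u) + (\<Sum>v\<in>{v. E u v}. real (deg E v)) / real (deg E u)"
proof -
  define d where "d w = real (deg E w)" for w
  have dpos: "d w \<ge> 1" for w using deg_pos[OF cg n2] by (simp add: d_def)
  define r where "r w = \<bar>x $ w\<bar> / d w" for w
  have "Max (range r) \<in> range r" by (rule Max_in) auto
  then obtain u where ru: "r u = Max (range r)" by (metis imageE)
  have rmax: "r w \<le> r u" for w unfolding ru by (rule Max_ge) auto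
  have xw: "\<bar>x $ w\<bar> \<le> d w * r u" for w
  proof -
    have "\<bar>x $ w\<bar> = d w * r w" using dpos[of w] by (simp add: r_def)
    also have "\<dots> \<le> d w * r u" using rmax[of w] dpos[of w] by (intro mult_left_mono) auto
    finally show ?thesis .
  qed
  have xu: "\<bar>x $ u\<bar> > 0"
  proof (rule ccontr)
    assume "\<not> \<bar>x $ u\<bar> > 0"
    then have "r u = 0" by (simp add: r_def)
    then have "x $ w = 0" for w using xw[of w] by simp
    then have "x = 0" by (simp add: vec_eq_iff)
    then show False using x0 by simp
  qed
  have "c * x $ u = d u * x $ u + (\<Sum>v\<in>{v. E u v}. x $ v)"
    using row_eq[of E x u] ev by (simp add: d_def)
  then have "(c - d u) * x $ u = (\<Sum>v\<in>{v. E u v}. x $ v)" by (simp add: algebra_simps)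
  then have "\<bar>c - d u\<bar> * \<bar>x $ u\<bar> = \<bar>\<Sum>v\<in>{v. E u v}. x $ v\<bar>" by (metis abs_mult)
  also have "\<dots> \<le> (\<Sum>v\<in>{v. E u v}. \<bar>x $ v\<bar>)" by (rule sum_abs)
  also have "\<dots> \<le> (\<Sum>v\<in>{v. E u v}. d v * r u)" by (rule sum_mono) (rule xw)
  also have "\<dots> = (\<Sum>v\<in>{v. E u v}. d v) * \<bar>x $ u\<bar> / d u"
    by (simp add: sum_distrib_right sum_divide_distrib r_def)
  finally have H: "\<bar>c - d u\<bar> * \<bar>x $ u\<bar> \<le> (\<Sum>v\<in>{v. E u v}. d v) * \<bar>x $ u\<bar> / d u" .
  then have "\<bar>c - d u\<bar> * \<bar>x $ u\<bar> \<le> ((\<Sum>v\<in>{v. E u v}. d v) / d u) * \<bar>x $ u\<bar>"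
    by (simp only: times_divide_eq_left)
  then have "\<bar>c - d u\<bar> \<le> (\<Sum>v\<in>{v. E u v}. d v) / d u" using xu by (rule mult_right_le_imp_le)
  then have "c \<le> d u + (\<Sum>v\<in>{v. E u v}. d v) / d u" by linarith
  then show ?thesis unfolding d_def by blast
qed

lemma local_bound:
  fixes d s C k :: real
  assumes "d \<ge> 1" "d \<le> k" "s \<le> C" "s \<le> d * k"
  shows "d + s / d \<le> C / k + k"
proof -
  have k: "k > 0" using assms by linarith
  have "k * d * d + k * s \<le> d * C + d * k * k"
  proof (cases "d * k \<le> C")
    case True
    have "k * s \<le> k * (d * k)" using assms k by (intro mult_left_mono) auto
    moreover have "d * (d * k) \<le> d * C" using True assms by (intro mult_left_mono) auto
    moreover have "k * d * d = d * (d * k)" by (simp add: algebra_simps)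
    ultimately show ?thesis by (simp add: algebra_simps)
  next
    case False
    have "k * s \<le> k * C" using assms k by (intro mult_left_mono) auto
    moreover have "(d * k - C) * (k - d) \<ge> 0" using False assms by (intro mult_nonneg_nonneg) auto
    ultimately show ?thesis by (simp add: algebra_simps)
  qed
  then have "(k * d * d + k * s) / (d * k) \<le> (d * C + d * k * k) / (d * k)"
    using assms k by (intro divide_right_mono) auto
  moreover have "(k * d * d + k * s) / (d * k) = d + s / d" using assms k by (simp add: field_simps)
  moreover have "(d * C + d * k * k) / (d * k) = C / k + k" using assms k by (simp add: field_simps)
  ultimately show ?thesis by simp
qed


lemma tangent_ab:
  fixes a b :: real
  assumes a: "a > 0" and b: "b > 0"
  shows "(3 * b^2 - a^2) / (2 * b^2 * b) \<le> 1 / a"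
proof -
  have "(a - b)^2 * (a + 2*b) \<ge> 0" using a b by simp
  then have "a * (3 * b^2 - a^2) \<le> 2 * b^3"
    by (simp add: algebra_simps power2_eq_square power3_eq_cube)
  then show ?thesis
    using a b by (simp add: field_simps power2_eq_square power3_eq_cube)
qed

lemma tangent:
  fixes w C :: real
  assumes "w > 0" "C > 0"
  shows "1 / sqrt w \<ge> (3 * C - w) / (2 * C * sqrt C)"
proof -
  have "(3 * (sqrt C)^2 - (sqrt w)^2) / (2 * (sqrt C)^2 * sqrt C) \<le> 1 / sqrt w"
    by (rule tangent_ab) (use assms in simp_all)
  then show ?thesis using assms by simp
qed

lemma randic_bound:
  fixes E :: "'a::finite \<Rightarrow> 'a \<Rightarrow> bool" and C :: real
  assumes sg: "simple_graph E" and cg: "connected_graph E" and n2: "CARD('a) \<ge> 2"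
    and Cpos: "C > 0" and sC: "\<And>u. (\<Sum>v\<in>{v. E u v}. real (deg E v)) \<le> C"
  shows "randic E \<ge> real (card (edges E)) / sqrt C"
proof -
  define d where "d x = real (deg E x)" for x
  define w where "w e = (\<Prod>x\<in>e. d x)" for e
  define m where "m = real (card (edges E))"
  have dpos: "d x \<ge> 1" for x using deg_pos[OF cg n2] by (simp add: d_def)
  have wpos: "w e > 0" for e unfolding w_def by (rule prod_pos) (use dpos in \<open>auto intro: less_le_trans[OF zero_less_one]\<close>)
  have R: "randic E = (\<Sum>e\<in>edges E. 1 / sqrt (w e))" by (simp add: randic_def w_def d_def)
  have "(\<Sum>e\<in>edges E. (3 * C - w e) / (2 * C * sqrt C)) \<le> (\<Sum>e\<in>edges E. 1 / sqrt (w e))"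
    by (rule sum_mono) (rule tangent[OF wpos Cpos])
  moreover have "(\<Sum>e\<in>edges E. (3 * C - w e) / (2 * C * sqrt C)) = (3 * C * m - (\<Sum>e\<in>edges E. w e)) / (2 * C * sqrt C)"
    by (simp add: sum_divide_distrib[symmetric] sum_subtractf m_def)
  moreover have sw: "(\<Sum>e\<in>edges E. w e) \<le> C * m"
  proof -
    have "(\<Sum>(u,v)\<in>{(u,v). E u v}. d u * d v) = 2 * (\<Sum>e\<in>edges E. w e)"
    proof (rule sum_edges[OF sg])
      fix u v assume "E u v"
      then have "u \<noteq> v" using sg by (auto simp: simple_graph_def)
      then show "d u * d v = w {u, v}" by (simp add: w_def)
    qed
    moreover have "(\<Sum>(u,v)\<in>{(u,v). E u v}. d u * d v) = (\<Sum>u\<in>UNIV. \<Sum>v\<in>{v. E u v}. d u * d v)"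
      by (rule sum_pairs)
    moreover have "(\<Sum>u\<in>UNIV. \<Sum>v\<in>{v. E u v}. d u * d v) \<le> (\<Sum>u\<in>UNIV. d u * C)"
    proof (rule sum_mono)
      fix u
      have "(\<Sum>v\<in>{v. E u v}. d u * d v) = d u * (\<Sum>v\<in>{v. E u v}. d v)" by (simp add: sum_distrib_left)
      also have "\<dots> \<le> d u * C" using sC[of u] dpos[of u] by (intro mult_left_mono) (auto simp: d_def)
      finally show "(\<Sum>v\<in>{v. E u v}. d u * d v) \<le> d u * C" .
    qed
    moreover have "(\<Sum>u\<in>UNIV. d u * C) = 2 * m * C"
      using handshake[OF sg] by (simp add: sum_distrib_right[symmetric] d_def m_def)
    ultimately show ?thesis by (simp add: algebra_simps)
  qed
  ultimately have "(3 * C * m - (\<Sum>e\<in>edges E. w e)) / (2 * C * sqrt C) \<le> randic E" using R by simp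
  moreover have "(2 * C * m) / (2 * C * sqrt C) \<le> (3 * C * m - (\<Sum>e\<in>edges E. w e)) / (2 * C * sqrt C)"
    using sw Cpos by (intro divide_right_mono) auto
  moreover have "(2 * C * m) / (2 * C * sqrt C) = m / sqrt C" using Cpos by simp
  ultimately show ?thesis by (simp add: m_def)
qed


theorem lemma3p1:
  fixes E :: "'a::finite \<Rightarrow> 'a \<Rightarrow> bool"
  defines "n \<equiv> CARD('a)"
  defines "m \<equiv> card (edges E)"
  assumes "simple_graph E"
    and "connected_graph E"
    and "n \<ge> 15"
    and "n + 8 \<le> m"
    and "real m \<le> 2 * real n powr (3/2)"
    and "m \<le> n choose 2"
  shows "q_index E / randic E < real n / sqrt (real n - 1)"
proof -
  note sg = assms(3) and cg = assms(4)
  have n2: "CARD('a) \<ge> 2" using assms(5) unfolding n_def by simp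
  define k where "k = real n - 1"
  define C where "C = 2 * real m - k"
  define B where "B = C / k + k"
  have k14: "k \<ge> 14" using assms(5) unfolding k_def by simp
  have mk: "k + 9 \<le> real m" using assms(6) unfolding k_def by simp
  have Cpos: "C > 0" using mk k14 unfolding C_def by simp
  have mub: "real m \<le> k * (k + 1) / 2"
  proof -
    have "real (n choose 2) = real (n - 1) * real n / 2"
      by (auto simp add: choose_two field_char_0_class.of_nat_div mod_eq_0_iff_dvd)
    moreover have "real (n - 1) = k" using assms(5) unfolding k_def by simp
    moreover have "real m \<le> real (n choose 2)" using assms(8) by simp
    ultimately show ?thesis unfolding k_def by simp
  qed
  have sym: "transpose (signless_laplacian E) = signless_laplacian E"
    using sg by (auto simp: transpose_def signless_laplacian_def vec_eq_iff simple_graph_def)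
  have qB: "q_index E \<le> B"
    unfolding q_index_def
  proof (subst Max_le_iff[OF eig_finite[OF sym] eig_nonempty[OF sym]], intro ballI)
    fix c assume "c \<in> eigenvalues (signless_laplacian E)"
    then obtain x where x: "x \<noteq> 0" "signless_laplacian E *v x = c *\<^sub>R x"
      unfolding eigenvalues_def by blast
    obtain u where u: "c \<le> real (deg E u) + (\<Sum>v\<in>{v. E u v}. real (deg E v)) / real (deg E u)"
      using eig_bound[OF sg cg n2 x(2) x(1)] by blast
    have "real (deg E u) + (\<Sum>v\<in>{v. E u v}. real (deg E v)) / real (deg E u) \<le> C / k + k"
    proof (rule local_bound)
      show "1 \<le> real (deg E u)" using deg_pos[OF cg n2, of u] by simp
      show "real (deg E u) \<le> k" using deg_le[OF sg, of u] unfolding k_def n_def by simp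
      show "(\<Sum>v\<in>{v. E u v}. real (deg E v)) \<le> C"
        using s_le[OF sg cg n2, of u] unfolding C_def k_def m_def n_def by simp
      show "(\<Sum>v\<in>{v. E u v}. real (deg E v)) \<le> real (deg E u) * k"
        using s_le2[OF sg, of u] unfolding k_def n_def by simp
    qed
    then show "c \<le> B" using u unfolding B_def by linarith
  qed
  have RC: "randic E \<ge> real m / sqrt C"
  proof (rule randic_bound[OF sg cg n2 Cpos, folded m_def])
    fix u show "(\<Sum>v\<in>{v. E u v}. real (deg E v)) \<le> C"
      using s_le[OF sg cg n2, of u] unfolding C_def k_def m_def n_def by simp
  qed
  have mpos: "real m > 0" using mk k14 by simp
  have lbpos: "real m / sqrt C > 0" using mpos Cpos by simp
  have Rpos: "randic E > 0" using RC lbpos by linarith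
  have Bpos: "B > 0" using Cpos k14 unfolding B_def by (intro add_pos_pos divide_pos_pos) auto
  have "q_index E / randic E \<le> B / randic E" using qB Rpos by (intro divide_right_mono) auto
  also have "\<dots> \<le> B / (real m / sqrt C)" using Bpos by (intro divide_left_mono[OF RC] mult_pos_pos[OF Rpos lbpos]) auto
  also have "\<dots> = B * sqrt C / real m" by simp
  also have "\<dots> < real n / sqrt k"
  proof -
    have P: "(2 * real m + k * (k - 1))^2 * (2 * real m - k) < k * (k + 1)^2 * (real m)^2"
      by (rule poly_ineq[OF k14 mk mub])
    have Beq: "B = (2 * real m + k * (k - 1)) / k" using k14 unfolding B_def C_def
      by (simp add: field_simps)
    have "(B * sqrt C * sqrt k)^2 = B^2 * C * k" using Cpos k14 by (simp add: power_mult_distrib)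
    also have "\<dots> = (2 * real m + k * (k - 1))^2 * (2 * real m - k) / k"
      unfolding Beq C_def using k14 by (simp add: power2_eq_square field_simps)
    also have "\<dots> < (k + 1)^2 * (real m)^2"
      using P k14 by (simp add: field_simps)
    also have "\<dots> = (real n * real m)^2" unfolding k_def by (simp add: power_mult_distrib)
    finally have "(B * sqrt C * sqrt k)^2 < (real n * real m)^2" .
    then have L: "B * sqrt C * sqrt k < real n * real m"
      by (rule power_less_imp_less_base) simp
    have skpos: "sqrt k > 0" using k14 by simp
    show ?thesis using L skpos mpos by (simp add: field_simps)
  qed
  finally show ?thesis unfolding k_def .
qed

end
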